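(* Let $M\in\mathbb R^{n\times n}$ be sufficient, $B$ a complementary basis with dictionary $D$, and let $i,j\in B$ be distinct such that $B'=(B\setminus\{i,j\})\cup\{\bar i,\bar j\}$ is a complementary basis. Then $$\dim\big(\mathcal C(B\setminus\{i\})\cap\mathcal C(B')\big)=n-1\iff D_{i\bar i}=0\ \text{ and }\ D_{j\bar i}<0 .$$
   Context: Let $M\in\mathbb R^{n\times n}$ and $A=[\,I\;\;-M\,]\in\mathbb R^{n\times 2n}$, with columns indexed by $\{1,\dots,2n\}$; for $J\subseteq\{1,\dots,2n\}$, $A_{\cdot J}$ denotes the submatrix of columns indexed by $J$. For $i\in\{1,\dots,2n\}$ the complementary index is $\bar i=i+n$ if $i\le n$ and $\bar i=i-n$ if $i>n$. A set $J$ is complementary if $i\in J$ implies $\bar i\notin J$. A complementary basis is a complementary set $B$ with $|B|=n$ and $A_{\cdot B}$ invertible; $N=\{1,\dots,2n\}\setminus B$. For a complementary set $J$, the complementary cone is $\mathcal C(J)=\{A_{\cdot J}\lambda:\lambda\ge 0\}$. For a complementary basis $B$, let $\beta=A_{\cdot B}^{-1}$ with rows indexed by $B$ (so $\beta_k A_{\cdot k'}=1$ if $k=k'$ and $0$ otherwise, for $k,k'\in B$); the dictionary of $B$ is $D=-\beta A_{\cdot N}$, with rows indexed by $B$ and columns indexed by $N$. The dimension of a convex set is the dimension of its affine hull. $M$ is column sufficient if $[z_i(Mz)_i\le 0\ \forall i]\Rightarrow[z_i(Mz)_i=0\ \forall i]$; row sufficient if $M^T$ is column sufficient; sufficient if both.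 *)

theory Defs
  imports "HOL-Analysis.Analysis"
begin

text \<open>Columns of A = [I, -M] are indexed by the sum type: Inl i is column i of I,
  Inr i is column i of -M (i.e. original index i+n).\<close>

definition colA :: "real^'n^'n \<Rightarrow> 'n + 'n \<Rightarrow> real^'n" where
  "colA M k = (case k of Inl i \<Rightarrow> axis i 1 | Inr i \<Rightarrow> - column i M)"

definition compl_idx :: "'n + 'n \<Rightarrow> 'n + 'n" where
  "compl_idx k = (case k of Inl i \<Rightarrow> Inr i | Inr i \<Rightarrow> Inl i)"

definition complementary :: "('n + 'n) set \<Rightarrow> bool" where
  "complementary J \<longleftrightarrow> (\<forall>k\<in>J. compl_idx k \<notin> J)"

text \<open>A_{.B} invertible: |B| = n and its columns are linearly independent.\<close>
definition comp_basis :: "real^'n^'n \<Rightarrow> ('n + 'n) set \<Rightarrow> bool" where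
  "comp_basis M B \<longleftrightarrow> complementary B \<and> card B = CARD('n) \<and>
     (\<forall>c. (\<Sum>k\<in>B. c k *\<^sub>R colA M k) = 0 \<longrightarrow> (\<forall>k\<in>B. c k = 0))"

definition comp_cone :: "real^'n^'n \<Rightarrow> ('n + 'n) set \<Rightarrow> (real^'n) set" where
  "comp_cone M J = {\<Sum>k\<in>J. c k *\<^sub>R colA M k | c. \<forall>k\<in>J. 0 \<le> c k}"

text \<open>beta_k v for k in B: the k-th entry of A_{.B}^{-1} v, i.e. the coefficient of
  column k in the unique representation of v in the columns of B.\<close>
definition beta :: "real^'n^'n \<Rightarrow> ('n + 'n) set \<Rightarrow> 'n + 'n \<Rightarrow> real^'n \<Rightarrow> real" where
  "beta M B k v = (THE x. (\<forall>l. l \<notin> B \<longrightarrow> x l = 0) \<and> v = (\<Sum>l\<in>B. x l *\<^sub>R colA M l)) k"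

text \<open>Dictionary D = - beta A_{.N}; entry (k,l) for k in B, l in N.\<close>
definition dict :: "real^'n^'n \<Rightarrow> ('n + 'n) set \<Rightarrow> 'n + 'n \<Rightarrow> 'n + 'n \<Rightarrow> real" where
  "dict M B k l = - beta M B k (colA M l)"

definition column_sufficient :: "real^'n^'n \<Rightarrow> bool" where
  "column_sufficient M \<longleftrightarrow>
     (\<forall>z. (\<forall>i. z$i * (M *v z)$i \<le> 0) \<longrightarrow> (\<forall>i. z$i * (M *v z)$i = 0))"

definition row_sufficient :: "real^'n^'n \<Rightarrow> bool" where
  "row_sufficient M \<longleftrightarrow> column_sufficient (transpose M)"

definition sufficient :: "real^'n^'n \<Rightarrow> bool" where
  "sufficient M \<longleftrightarrow> column_sufficient M \<and> row_sufficient M"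

end

theory Submission imports Defs begin


definition lc :: "real^'n^'n \<Rightarrow> ('n+'n \<Rightarrow> real) \<Rightarrow> real^'n" where
  "lc M y = (\<Sum>k\<in>UNIV. y k *\<^sub>R colA M k)"

lemma lc_restrict:
  assumes "\<forall>k. k \<notin> T \<longrightarrow> y k = 0"
  shows "lc M y = (\<Sum>k\<in>T. y k *\<^sub>R colA M k)"
  unfolding lc_def using assms by (intro sum.mono_neutral_right) auto

lemma lc_add: "lc M (\<lambda>k. y k + z k) = lc M y + lc M z"
  unfolding lc_def by (simp add: scaleR_add_left sum.distrib)

lemma lc_diff: "lc M (\<lambda>k. y k - z k) = lc M y - lc M z"
  unfolding lc_def by (simp add: scaleR_diff_left sum_subtractf)

lemma lc_scale: "lc M (\<lambda>k. a * y k) = a *\<^sub>R lc M y"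
  unfolding lc_def by (simp add: scaleR_sum_right)

lemma lc_single: "lc M (\<lambda>k. if k = l then 1 else 0) = colA M l"
  by (subst lc_restrict[where T="{l}"]) auto

lemma cone_iff: "v \<in> comp_cone M J \<longleftrightarrow>
   (\<exists>y. (\<forall>k. k \<notin> J \<longrightarrow> y k = 0) \<and> (\<forall>k\<in>J. 0 \<le> y k) \<and> v = lc M y)"
proof
  assume "v \<in> comp_cone M J"
  then obtain c where c: "v = (\<Sum>k\<in>J. c k *\<^sub>R colA M k)" "\<forall>k\<in>J. 0 \<le> c k"
    unfolding comp_cone_def by blast
  define y where "y = (\<lambda>k. if k \<in> J then c k else 0)"
  have "lc M y = (\<Sum>k\<in>J. y k *\<^sub>R colA M k)" by (rule lc_restrict) (simp add: y_def)
  also have "\<dots> = v" unfolding c y_def by (rule sum.cong) auto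
  finally show "\<exists>y. (\<forall>k. k \<notin> J \<longrightarrow> y k = 0) \<and> (\<forall>k\<in>J. 0 \<le> y k) \<and> v = lc M y"
    using c by (intro exI[of _ y]) (auto simp: y_def)
next
  assume "\<exists>y. (\<forall>k. k \<notin> J \<longrightarrow> y k = 0) \<and> (\<forall>k\<in>J. 0 \<le> y k) \<and> v = lc M y"
  then obtain y where y: "\<forall>k. k \<notin> J \<longrightarrow> y k = 0" "\<forall>k\<in>J. 0 \<le> y k" "v = lc M y" by blast
  show "v \<in> comp_cone M J" unfolding comp_cone_def
    using y lc_restrict[OF y(1), of M] by blast
qed

lemma basis_indep:
  assumes "comp_basis M B" "\<forall>k. k \<notin> B \<longrightarrow> y k = 0" "lc M y = 0"
  shows "y k = 0"
  using assms lc_restrict[OF assms(2), of M] unfolding comp_basis_def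
  by (cases "k \<in> B") auto

lemma basis_inj:
  assumes "comp_basis M B" shows "inj_on (colA M) B"
proof (rule inj_onI, rule ccontr)
  fix k l assume kl: "k \<in> B" "l \<in> B" "colA M k = colA M l" "k \<noteq> l"
  define y where "y = (\<lambda>m. if m = k then 1 else if m = l then -1 else (0::real))"
  have "lc M y = (\<Sum>m\<in>{k,l}. y m *\<^sub>R colA M m)" by (rule lc_restrict) (simp add: y_def)
  also have "\<dots> = 0" using kl by (simp add: y_def)
  finally have "y k = 0" using assms kl by (intro basis_indep[of M B]) (auto simp: y_def)
  then show False by (simp add: y_def)
qed

lemma basis_independent:
  assumes "comp_basis M B" shows "independent (colA M ` B)"
proof
  assume "dependent (colA M ` B)"
  then obtain u where u: "\<exists>v\<in>colA M ` B. u v \<noteq> 0" "(\<Sum>v\<in>colA M ` B. u v *\<^sub>R v) = 0"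
    using dependent_finite[of "colA M ` B"] by auto
  define y where "y = (\<lambda>k. if k \<in> B then u (colA M k) else 0)"
  have "lc M y = (\<Sum>k\<in>B. y k *\<^sub>R colA M k)" by (rule lc_restrict) (simp add: y_def)
  also have "\<dots> = (\<Sum>k\<in>B. u (colA M k) *\<^sub>R colA M k)" by (simp add: y_def)
  also have "\<dots> = (\<Sum>v\<in>colA M ` B. u v *\<^sub>R v)"
    by (simp add: sum.reindex[OF basis_inj[OF assms]])
  finally have "lc M y = 0" using u by simp
  then have "\<And>k. y k = 0" using assms by (intro basis_indep[of M B]) (auto simp: y_def)
  moreover obtain k where "k \<in> B" "u (colA M k) \<noteq> 0" using u(1) by blast
  ultimately show False by (metis y_def)
qed

lemma basis_span:
  assumes "comp_basis M B" shows "span (colA M ` B) = UNIV"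
proof -
  have "card (colA M ` B) = CARD('a)"
    using assms basis_inj[OF assms] card_image unfolding comp_basis_def by metis
  then have "UNIV \<subseteq> span (colA M ` B)"
    using card_eq_dim[of "colA M ` B" UNIV] basis_independent[OF assms] by simp
  then show ?thesis by auto
qed

lemma basis_repr:
  assumes "comp_basis M B" shows "\<exists>x. (\<forall>l. l \<notin> B \<longrightarrow> x l = 0) \<and> v = lc M x"
proof -
  have "v \<in> span (colA M ` B)" using basis_span[OF assms] by simp
  then obtain u where u: "v = (\<Sum>w\<in>colA M ` B. u w *\<^sub>R w)"
    using span_finite[of "colA M ` B"] by auto
  define x where "x = (\<lambda>k. if k \<in> B then u (colA M k) else 0)"
  have "lc M x = (\<Sum>k\<in>B. x k *\<^sub>R colA M k)" by (rule lc_restrict) (simp add: x_def)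
  also have "\<dots> = (\<Sum>k\<in>B. u (colA M k) *\<^sub>R colA M k)" by (simp add: x_def)
  also have "\<dots> = v" unfolding u
    by (simp add: sum.reindex[OF basis_inj[OF assms]])
  finally show ?thesis by (intro exI[of _ x]) (auto simp: x_def)
qed

lemma beta_eq:
  assumes "comp_basis M B" "\<forall>l. l \<notin> B \<longrightarrow> x l = 0" "v = lc M x"
  shows "beta M B k v = x k"
proof -
  have "(THE x. (\<forall>l. l \<notin> B \<longrightarrow> x l = 0) \<and> v = (\<Sum>l\<in>B. x l *\<^sub>R colA M l)) = x"
  proof (rule the_equality)
    show "(\<forall>l. l \<notin> B \<longrightarrow> x l = 0) \<and> v = (\<Sum>l\<in>B. x l *\<^sub>R colA M l)"
      using assms lc_restrict[OF assms(2), of M] by simp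
  next
    fix x' assume x': "(\<forall>l. l \<notin> B \<longrightarrow> x' l = 0) \<and> v = (\<Sum>l\<in>B. x' l *\<^sub>R colA M l)"
    have "lc M (\<lambda>k. x' k - x k) = 0"
      using x' assms lc_restrict[of B x' M] by (simp add: lc_diff)
    then have "\<And>k. x' k - x k = 0" using assms(1,2) x'
      by (intro basis_indep[of M B]) auto
    then show "x' = x" by auto
  qed
  then show ?thesis unfolding beta_def by simp
qed




lemma lc_split: "lc M y = (\<chi> m. y (Inl m)) - M *v (\<chi> m. y (Inr m))"
proof -
  have "lc M y = (\<Sum>k\<in>(UNIV <+> UNIV). y k *\<^sub>R colA M k)"
    unfolding lc_def UNIV_Plus_UNIV ..
  also have "\<dots> = (\<Sum>m\<in>UNIV. y (Inl m) *\<^sub>R axis m 1) + (\<Sum>m\<in>UNIV. y (Inr m) *\<^sub>R (- column m M))"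
    by (subst sum.Plus) (auto simp: colA_def o_def)
  also have "(\<Sum>m\<in>UNIV. y (Inl m) *\<^sub>R axis m 1) = (\<chi> m. y (Inl m))"
    by (simp add: vec_eq_iff axis_def if_distrib cong: if_cong)
  also have "(\<Sum>m\<in>UNIV. y (Inr m) *\<^sub>R (- column m M)) = - (M *v (\<chi> m. y (Inr m)))"
    by (simp add: matrix_mult_sum scalar_mult_eq_scaleR sum_negf)
  finally show ?thesis by simp
qed

lemma compl_compl[simp]: "compl_idx (compl_idx k) = k"
  by (cases k) (auto simp: compl_idx_def)

lemma compl_neq[simp]: "compl_idx k \<noteq> k"
  by (cases k) (auto simp: compl_idx_def)

lemma compl_inj[simp]: "compl_idx a = compl_idx b \<longleftrightarrow> a = b"
  by (metis compl_compl)

lemma colsuff_prod: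
  assumes "column_sufficient M" "lc M y = 0" "\<forall>k. y k * y (compl_idx k) \<le> 0"
  shows "y k * y (compl_idx k) = 0"
proof -
  define u where "u = (\<chi> m. y (Inr m))"
  have Mu: "M *v u = (\<chi> m. y (Inl m))" using lc_split[of M y] assms(2) by (simp add: u_def)
  have le: "\<forall>m. u$m * (M *v u)$m \<le> 0"
  proof
    fix m show "u$m * (M *v u)$m \<le> 0"
      using spec[OF assms(3), of "Inl m"] unfolding Mu unfolding u_def
      by (simp add: compl_idx_def mult.commute)
  qed
  then have "\<forall>m. u$m * (M *v u)$m = 0" using assms(1) unfolding column_sufficient_def by blast
  then show ?thesis unfolding Mu unfolding u_def
    by (cases k) (auto simp: compl_idx_def mult.commute)
qed




lemma key_conv:
  assumes cs: "column_sufficient M" and B: "comp_basis M B"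
    and i: "i \<in> B" and j: "j \<in> B" and ij: "i \<noteq> j"
    and v: "v \<in> comp_cone M ((B - {i, j}) \<union> {compl_idx i, compl_idx j})"
    and d: "\<forall>k. k \<notin> B - {i} \<longrightarrow> d k = 0" "\<forall>k\<in>B-{i}. 0 \<le> d k" "v = lc M d" "d j > 0"
  shows "dict M B i (compl_idx i) = 0 \<and> dict M B j (compl_idx i) < 0"
proof -
  define B' where "B' = (B - {i, j}) \<union> {compl_idx i, compl_idx j}"
  have compB: "\<forall>k\<in>B. compl_idx k \<notin> B" using B by (simp add: comp_basis_def complementary_def)
  have "v \<in> comp_cone M B'" using v unfolding B'_def .
  then obtain c where c: "\<forall>k. k \<notin> B' \<longrightarrow> c k = 0" "\<forall>k\<in>B'. 0 \<le> c k" "v = lc M c"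
    unfolding cone_iff by blast
  have ii: "compl_idx i \<notin> B" "compl_idx j \<notin> B" using compB i j by auto
  have neq: "j \<noteq> compl_idx i" "j \<noteq> compl_idx j" "i \<noteq> compl_idx i" "i \<noteq> compl_idx j"
    using ii i j by metis+
  have cj: "c j = 0" using c(1) neq j unfolding B'_def by auto
  have ci: "c i = 0" using c(1) neq i unfolding B'_def by auto
  have di: "d i = 0" "d (compl_idx i) = 0" "d (compl_idx j) = 0" using d(1) ii by auto
  have cjj: "0 \<le> c (compl_idx j)" using c(2) unfolding B'_def by auto
  define y where "y = (\<lambda>k. c k - d k)"
  have ly: "lc M y = 0" unfolding y_def lc_diff using c d by simp
  have prod: "\<forall>k. y k * y (compl_idx k) \<le> 0"
  proof
    fix k
    show "y k * y (compl_idx k) \<le> 0"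
    proof (cases "k = j \<or> k = compl_idx j")
      case True
      have "y j * y (compl_idx j) \<le> 0"
        unfolding y_def using cj di cjj d(4) by (simp add: mult_nonpos_nonneg)
      then show ?thesis using True by (auto simp: mult.commute)
    next
      case F1: False
      show ?thesis
      proof (cases "k = i \<or> k = compl_idx i")
        case True
        have "y i = 0" unfolding y_def using ci di by simp
        then show ?thesis using True by auto
      next
        case F2: False
        have nk: "compl_idx k \<noteq> i" "compl_idx k \<noteq> j" using F1 F2 by auto
        show ?thesis
        proof (cases "k \<in> B")
          case True
          then have "compl_idx k \<notin> B" using compB by auto
          then have "c (compl_idx k) = 0" "d (compl_idx k) = 0"
            using c(1) d(1) F1 F2 unfolding B'_def by auto
          then show ?thesis by (simp add: y_def)
        next
          case False
          then have "c k = 0" "d k = 0" using c(1) d(1) nk F1 F2 unfolding B'_def by auto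
          then show ?thesis by (simp add: y_def)
        qed
      qed
    qed
  qed
  have "y j * y (compl_idx j) = 0" using colsuff_prod[OF cs ly prod] .
  then have cjj0: "c (compl_idx j) = 0" unfolding y_def using cj di d(4) by simp
  define c' where "c' = (\<lambda>k. if k = compl_idx i then 0 else c k)"
  have c'supp: "\<forall>k. k \<notin> B - {i, j} \<longrightarrow> c' k = 0"
    using c(1) cjj0 unfolding c'_def B'_def by auto
  have ceq: "c = (\<lambda>k. c (compl_idx i) * (if k = compl_idx i then 1 else 0) + c' k)"
    unfolding c'_def by auto
  have lcc: "lc M c = c (compl_idx i) *\<^sub>R colA M (compl_idx i) + lc M c'"
  proof -
    have "lc M c = lc M (\<lambda>k. c (compl_idx i) * (if k = compl_idx i then 1 else 0) + c' k)"
      using ceq by (rule arg_cong)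
    also have "\<dots> = lc M (\<lambda>k. c (compl_idx i) * (if k = compl_idx i then 1 else 0)) + lc M c'"
      by (rule lc_add)
    also have "lc M (\<lambda>k. c (compl_idx i) * (if k = compl_idx i then 1 else 0))
        = c (compl_idx i) *\<^sub>R colA M (compl_idx i)"
      by (simp only: lc_scale lc_single)
    finally show ?thesis .
  qed
  have cpos: "c (compl_idx i) \<noteq> 0"
  proof
    assume c0: "c (compl_idx i) = 0"
    have "lc M (\<lambda>k. c' k - d k) = 0" using lcc c0 c(3) d(3) by (simp add: lc_diff)
    then have "c' j - d j = 0" using B c'supp d(1) by (intro basis_indep[of M B]) auto
    moreover have "c' j = 0" using c'supp by auto
    ultimately show False using d(4) by simp
  qed
  define e where "e = (\<lambda>k. (1 / c (compl_idx i)) * (d k - c' k))"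
  have "lc M e = (1 / c (compl_idx i)) *\<^sub>R (lc M d - lc M c')"
    unfolding e_def lc_scale lc_diff ..
  also have "\<dots> = colA M (compl_idx i)" using lcc c(3) d(3) cpos by simp
  finally have le: "colA M (compl_idx i) = lc M e" ..
  have esupp: "\<forall>k. k \<notin> B \<longrightarrow> e k = 0" using c'supp d(1) unfolding e_def by auto
  have b1: "beta M B i (colA M (compl_idx i)) = e i" by (rule beta_eq[OF B esupp le])
  have b2: "beta M B j (colA M (compl_idx i)) = e j" by (rule beta_eq[OF B esupp le])
  have "e i = 0" unfolding e_def using di c'supp by simp
  moreover have "e j > 0"
  proof -
    have "c (compl_idx i) \<ge> 0" using c(2) unfolding B'_def by auto
    then have "c (compl_idx i) > 0" using cpos by simp
    moreover have "c' j = 0" using c'supp by auto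
    ultimately show ?thesis unfolding e_def using d(4) by simp
  qed
  ultimately show ?thesis using b1 b2 unfolding dict_def by simp
qed




lemma cone_span: "comp_cone M J \<subseteq> span (colA M ` J)"
proof
  fix v assume "v \<in> comp_cone M J"
  then obtain c where c: "v = (\<Sum>k\<in>J. c k *\<^sub>R colA M k)" unfolding comp_cone_def by blast
  have "(\<Sum>k\<in>J. c k *\<^sub>R colA M k) \<in> span (colA M ` J)"
  proof (rule span_sum)
    fix k assume "k \<in> J"
    then have "colA M k \<in> span (colA M ` J)" by (simp add: span_base)
    then show "c k *\<^sub>R colA M k \<in> span (colA M ` J)" by (rule span_scale)
  qed
  then show "v \<in> span (colA M ` J)" using c by simp
qed

lemma aff_dim_le_card:
  assumes "S \<subseteq> span X" "finite X" shows "aff_dim S \<le> int (card X)"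
proof -
  have "aff_dim S \<le> aff_dim (span X)" using assms(1) by (rule aff_dim_subset)
  also have "\<dots> = int (dim X)" by (simp add: aff_dim_subspace)
  also have "dim X \<le> card X" using dim_le_card[OF span_superset assms(2)] .
  finally show ?thesis by simp
qed

lemma lower_bound:
  fixes M :: "real^'n^'n"
  assumes B: "comp_basis M B" and i: "i \<in> B" and j: "j \<in> B" and ij: "i \<noteq> j"
    and cond: "dict M B i (compl_idx i) = 0" "dict M B j (compl_idx i) < 0"
  shows "aff_dim (comp_cone M (B - {i}) \<inter> comp_cone M ((B - {i, j}) \<union> {compl_idx i, compl_idx j}))
           \<ge> int CARD('n) - 1"
proof -
  define B' where "B' = (B - {i, j}) \<union> {compl_idx i, compl_idx j}"
  define S where "S = comp_cone M (B - {i}) \<inter> comp_cone M B'"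
  have compB: "\<forall>k\<in>B. compl_idx k \<notin> B" using B by (simp add: comp_basis_def complementary_def)
  have ii: "compl_idx i \<notin> B" "compl_idx j \<notin> B" using compB i j by auto
  obtain x where x: "\<forall>l. l \<notin> B \<longrightarrow> x l = 0" "colA M (compl_idx i) = lc M x"
    using basis_repr[OF B] by blast
  have xi: "x i = 0" using beta_eq[OF B x, of i] cond(1) unfolding dict_def by simp
  have xj: "x j > 0" using beta_eq[OF B x, of j] cond(2) unfolding dict_def by simp
  define lam where "lam = (\<lambda>k. if k \<in> B - {i, j} then \<bar>x k\<bar> else 0)"
  define c where "c = (\<lambda>k. (if k = compl_idx i then 1 else 0) + lam k)"
  define d where "d = (\<lambda>k. x k + lam k)"
  define v where "v = lc M c"
  have vc: "v = colA M (compl_idx i) + lc M lam"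
    unfolding v_def c_def lc_add lc_single ..
  have vd: "v = lc M d" unfolding vc d_def lc_add x(2) ..
  have v1: "v \<in> comp_cone M B'" unfolding cone_iff
    by (rule exI[of _ c]) (auto simp: v_def c_def lam_def B'_def)
  have dsupp: "\<forall>k. k \<notin> B - {i} \<longrightarrow> d k = 0" using x(1) xi by (auto simp: d_def lam_def)
  have v2: "v \<in> comp_cone M (B - {i})" unfolding cone_iff
    using dsupp xj vd by (intro exI[of _ d]) (auto simp: d_def lam_def)
  have vS: "v \<in> S" using v1 v2 by (simp add: S_def)
  have AS: "colA M k \<in> S" if "k \<in> B - {i, j}" for k
  proof -
    have "colA M k = lc M (\<lambda>l. if l = k then 1 else 0)" by (simp add: lc_single)
    moreover have "colA M k \<in> comp_cone M (B - {i})" unfolding cone_iff using that calculation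
      by (intro exI[of _ "\<lambda>l. if l = k then 1 else 0"]) auto
    moreover have "colA M k \<in> comp_cone M B'" unfolding cone_iff B'_def using that calculation(1)
      by (intro exI[of _ "\<lambda>l. if l = k then 1 else 0"]) auto
    ultimately show ?thesis unfolding S_def by blast
  qed
  have 0: "0 \<in> S"
  proof -
    have "\<And>J. (0::real^'n) \<in> comp_cone M J" unfolding comp_cone_def
      by (intro CollectI exI[of _ "\<lambda>_. 0::real"]) simp
    then show ?thesis unfolding S_def by blast
  qed
  have "v = (\<Sum>k\<in>B - {i}. d k *\<^sub>R colA M k)" using vd lc_restrict[OF dsupp] by simp
  also have "B - {i} = insert j (B - {i, j})" using j ij by auto
  finally have "v = d j *\<^sub>R colA M j + (\<Sum>k\<in>B - {i, j}. d k *\<^sub>R colA M k)" by simp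
  then have "d j *\<^sub>R colA M j = v - (\<Sum>k\<in>B - {i, j}. d k *\<^sub>R colA M k)" by simp
  also have "\<dots> \<in> span S" using vS AS
    by (intro span_diff span_base span_sum span_scale) auto
  finally have "(1 / d j) *\<^sub>R (d j *\<^sub>R colA M j) \<in> span S" by (rule span_scale)
  moreover have "d j > 0" using xj by (simp add: d_def lam_def)
  ultimately have Aj: "colA M j \<in> span S" by simp
  have sub: "colA M ` (B - {i}) \<subseteq> span S"
  proof
    fix w assume "w \<in> colA M ` (B - {i})"
    then obtain k where k: "k \<in> B - {i}" "w = colA M k" by blast
    show "w \<in> span S" using Aj AS[of k] k span_base by (cases "k = j") auto
  qed
  have inj: "inj_on (colA M) (B - {i})" by (rule inj_on_subset[OF basis_inj[OF B] Diff_subset])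
  have cB: "card (B - {i}) = CARD('n) - 1" using B i by (simp add: comp_basis_def)
  have c1: "card (colA M ` (B - {i})) = CARD('n) - 1" using card_image[OF inj] cB by simp
  have indep: "independent (colA M ` (B - {i}))"
    by (rule independent_mono[OF basis_independent[OF B]]) blast
  have d1: "dim (colA M ` (B - {i})) = card (colA M ` (B - {i}))"
    by (rule dim_eq_card_independent[OF indep])
  have d2: "dim (colA M ` (B - {i})) \<le> dim S"
    using dim_subset[OF sub] by simp
  have a1: "aff_dim S = int (dim S)"
    using aff_dim_eq_dim[of 0 S] 0 by (simp add: hull_inc)
  have "CARD('n) \<ge> 1" by simp
  then have "int CARD('n) - 1 \<le> int (dim S)" using c1 d1 d2 by linarith
  then show ?thesis using a1 unfolding S_def B'_def by simp
qed




theorem mainTheorem3: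
  fixes M :: "real^'n^'n" and B :: "('n + 'n) set" and i j :: "'n + 'n"
  assumes "sufficient M"
    and "comp_basis M B"
    and "i \<in> B" and "j \<in> B" and "i \<noteq> j"
    and "comp_basis M ((B - {i, j}) \<union> {compl_idx i, compl_idx j})"
  shows "aff_dim (comp_cone M (B - {i}) \<inter> comp_cone M ((B - {i, j}) \<union> {compl_idx i, compl_idx j}))
           = int CARD('n) - 1
         \<longleftrightarrow> dict M B i (compl_idx i) = 0 \<and> dict M B j (compl_idx i) < 0"
proof -
  note B = assms(2) and i = assms(3) and j = assms(4) and ij = assms(5)
  have cs: "column_sufficient M" using assms(1) by (simp add: sufficient_def)
  define B' where "B' = (B - {i, j}) \<union> {compl_idx i, compl_idx j}"
  define S where "S = comp_cone M (B - {i}) \<inter> comp_cone M B'"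
  have cB: "card B = CARD('n)" using B by (simp add: comp_basis_def)
  have n2: "CARD('n) \<ge> 2"
  proof -
    have "card {i, j} \<le> card B" using i j by (intro card_mono) auto
    then show ?thesis using ij cB by simp
  qed
  have up: "aff_dim S \<le> int CARD('n) - 1"
  proof -
    have "S \<subseteq> span (colA M ` (B - {i}))" using cone_span unfolding S_def by blast
    then have "aff_dim S \<le> int (card (colA M ` (B - {i})))" by (rule aff_dim_le_card) simp
    also have "card (colA M ` (B - {i})) \<le> card (B - {i})" by (rule card_image_le) simp
    also have "card (B - {i}) = CARD('n) - 1" using cB i by simp
    finally show ?thesis using n2 by linarith
  qed
  show ?thesis unfolding B'_def[symmetric] S_def[symmetric]
  proof
    assume dimS: "aff_dim S = int CARD('n) - 1"
    show "dict M B i (compl_idx i) = 0 \<and> dict M B j (compl_idx i) < 0"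
    proof (rule ccontr)
      assume nc: "\<not> (dict M B i (compl_idx i) = 0 \<and> dict M B j (compl_idx i) < 0)"
      have "S \<subseteq> span (colA M ` (B - {i, j}))"
      proof
        fix v assume "v \<in> S"
        then have v1: "v \<in> comp_cone M (B - {i})" and v2: "v \<in> comp_cone M B'"
          unfolding S_def by auto
        obtain d where d: "\<forall>k. k \<notin> B - {i} \<longrightarrow> d k = 0" "\<forall>k\<in>B-{i}. 0 \<le> d k" "v = lc M d"
          using v1 unfolding cone_iff by blast
        have "\<not> d j > 0"
        proof
          assume "d j > 0"
          then show False using key_conv[OF cs B i j ij v2[unfolded B'_def] d] nc by blast
        qed
        moreover have "d j \<ge> 0" using d(2) j ij by auto
        ultimately have "d j = 0" by simp
        then have d': "\<forall>k. k \<notin> B - {i, j} \<longrightarrow> d k = 0" using d(1) by auto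
        have "v = (\<Sum>k\<in>B - {i, j}. d k *\<^sub>R colA M k)" using d(3) lc_restrict[OF d'] by simp
        also have "\<dots> \<in> span (colA M ` (B - {i, j}))"
        proof (rule span_sum)
          fix k assume "k \<in> B - {i, j}"
          then have "colA M k \<in> span (colA M ` (B - {i, j}))" by (simp add: span_base)
          then show "d k *\<^sub>R colA M k \<in> span (colA M ` (B - {i, j}))" by (rule span_scale)
        qed
        finally show "v \<in> span (colA M ` (B - {i, j}))" .
      qed
      then have "aff_dim S \<le> int (card (colA M ` (B - {i, j})))" by (rule aff_dim_le_card) simp
      also have "card (colA M ` (B - {i, j})) \<le> card (B - {i, j})" by (rule card_image_le) simp
      also have "card (B - {i, j}) = CARD('n) - 2"
      proof -
        have "card (B - {i, j}) = card B - card {i, j}"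
          using i j by (intro card_Diff_subset) auto
        then show ?thesis using cB ij by simp
      qed
      finally show False using dimS n2 by linarith
    qed
  next
    assume cond: "dict M B i (compl_idx i) = 0 \<and> dict M B j (compl_idx i) < 0"
    have "aff_dim S \<ge> int CARD('n) - 1"
      using lower_bound[OF B i j ij] cond unfolding S_def B'_def by blast
    then show "aff_dim S = int CARD('n) - 1" using up by linarith
  qed
qed


end
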